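(* Under the standing setting and the absorbing-state assumptions (i)–(iv) in the context, there exists $K>0$ such that for all $\mathbf{x}\in\mathbb{R}^N$, $\mathbf{v}\in\chi$, $\lambda>0$, $t\ge0$ and every sequence $l=(\mathbf{x}^{(k)})_{k\ge1}$ with all $\mathbf{x}^{(k)}$ in the closed $\|\cdot\|_1$-ball $\bar B\big(\mathbf{x},\frac{1-z_0}{2K_0\tilde n}\big)$, $$\|\tilde\mu_t^{\lambda,\mathbf{x},\mathbf{v}}-\mu_t^{\lambda,\mathbf{x},\mathbf{v},l}\|_{TV}\le K\sup_{i\ge1}\|\mathbf{x}-\mathbf{x}^{(i)}\|_1.$$
   Context: Let $N\ge1$, $\chi$ a finite set, and $\{\mathcal{P}_{\mathbf{x}}\}_{\mathbf{x}\in\mathbb{R}^N}$ a family of transition matrices on $\chi$. For $\mathbf{x}\in\mathbb{R}^N$, $\mathbf{v}\in\chi$, $\lambda>0$, the frozen process $\tilde V_t^{\lambda,\mathbf{x},\mathbf{v}}$ is the càdlàg continuous-time Markov chain on $\chi$ started at $\mathbf{v}$ which jumps according to the fixed matrix $\mathcal{P}_{\mathbf{x}}$ at each ring of a Poisson clock of rate $\lambda$; its law is $\tilde\mu_t^{\lambda,\mathbf{x},\mathbf{v}}$. For a sequence $l=(\mathbf{x}^{(k)})_{k\ge1}\subset\mathbb{R}^N$, $V_t^{\lambda,\mathbf{x},\mathbf{v},l}$ is the process on $\chi$ started at $\mathbf{v}$ which, at the $k$-th ring of a Poisson clock of rate $\lambda$, jumps according to $\mathcal{P}_{\mathbf{x}^{(k)}}$;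 its law is $\mu_t^{\lambda,\mathbf{x},\mathbf{v},l}$. $\tilde V_k^{\mathbf{x},\mathbf{v}}$ is the discrete-time chain with transition matrix $\mathcal{P}_{\mathbf{x}}$ started at $\mathbf{v}$. Absorbing-state assumptions: there are distinct states $\mathbf{e}^{(1)},\dots,\mathbf{e}^{(L)}\in\chi$ such that (i) each $\mathcal{P}_{\mathbf{x}}$ is stochastic; (ii) $\mathcal{P}_{\mathbf{x}}(\mathbf{e}^{(i)},\mathbf{e}^{(i)})=1$ for all $i,\mathbf{x}$; (iii) there exist $\tilde n\ge1$ and $z_0<1$ with $\mathbb{P}[\tilde V_{\tilde n}^{\mathbf{x},\mathbf{v}}\notin\{\mathbf{e}^{(1)},\dots,\mathbf{e}^{(L)}\}]\le z_0$ for all $\mathbf{x},\mathbf{v}$; (iv) there is $K_0>0$ with $\sum_{\mathbf{v}'}|\mathcal{P}_{\mathbf{x}}(\mathbf{v},\mathbf{v}')-\mathcal{P}_{\mathbf{x}'}(\mathbf{v},\mathbf{v}')|\le K_0\|\mathbf{x}-\mathbf{x}'\|_1$ for all $\mathbf{v},\mathbf{x},\mathbf{x}'$, where $\|\mathbf{w}\|_1=\sum_i|w_i|$. $\|\mu\|_{TV}:=\sum_{\mathbf{v}'\in\chi}|\mu(\mathbf{v}')|$. *)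

theory Defs
  imports "HOL-Analysis.Analysis"
begin

text \<open>Transition-matrix families: P x u w is the probability of jumping from u to w
  under the matrix indexed by x. The state space chi is a finite type 'v,
  points of R^N are vectors real^'n.\<close>

definition norm1 :: "real^'n \<Rightarrow> real" where
  "norm1 x = (\<Sum>i\<in>UNIV. \<bar>x $ i\<bar>)"

definition tv_norm :: "('v::finite \<Rightarrow> real) \<Rightarrow> real" where
  "tv_norm \<mu> = (\<Sum>w\<in>UNIV. \<bar>\<mu> w\<bar>)"

definition dirac_dist :: "'v \<Rightarrow> 'v \<Rightarrow> real" where
  "dirac_dist v = (\<lambda>w. if w = v then 1 else 0)"

definition step_dist :: "('x \<Rightarrow> 'v::finite \<Rightarrow> 'v \<Rightarrow> real) \<Rightarrow> 'x \<Rightarrow> ('v \<Rightarrow> real) \<Rightarrow> 'v \<Rightarrow> real" where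
  "step_dist P x \<mu> = (\<lambda>w. \<Sum>u\<in>UNIV. \<mu> u * P x u w)"

definition frozen_dist :: "('x \<Rightarrow> 'v::finite \<Rightarrow> 'v \<Rightarrow> real) \<Rightarrow> 'x \<Rightarrow> 'v \<Rightarrow> nat \<Rightarrow> 'v \<Rightarrow> real" where
  "frozen_dist P x v n = (step_dist P x ^^ n) (dirac_dist v)"

fun seq_dist :: "('x \<Rightarrow> 'v::finite \<Rightarrow> 'v \<Rightarrow> real) \<Rightarrow> (nat \<Rightarrow> 'x) \<Rightarrow> 'v \<Rightarrow> nat \<Rightarrow> 'v \<Rightarrow> real" where
  "seq_dist P l v 0 = dirac_dist v"
| "seq_dist P l v (Suc n) = step_dist P (l (Suc n)) (seq_dist P l v n)"

definition poisson_weight :: "real \<Rightarrow> real \<Rightarrow> nat \<Rightarrow> real" where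
  "poisson_weight lam t n = exp (- lam * t) * (lam * t) ^ n / fact n"

text \<open>Law at time t of the processes driven by a rate-lam Poisson clock:
  the number of rings up to time t is Poisson(lam t), independent of the jumps.\<close>
definition mu_frozen :: "('x \<Rightarrow> 'v::finite \<Rightarrow> 'v \<Rightarrow> real) \<Rightarrow> real \<Rightarrow> 'x \<Rightarrow> 'v \<Rightarrow> real \<Rightarrow> 'v \<Rightarrow> real" where
  "mu_frozen P lam x v t = (\<lambda>w. \<Sum>n. poisson_weight lam t n * frozen_dist P x v n w)"

definition mu_seq :: "('x \<Rightarrow> 'v::finite \<Rightarrow> 'v \<Rightarrow> real) \<Rightarrow> real \<Rightarrow> 'v \<Rightarrow> (nat \<Rightarrow> 'x) \<Rightarrow> real \<Rightarrow> 'v \<Rightarrow> real" where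
  "mu_seq P lam v l t = (\<lambda>w. \<Sum>n. poisson_weight lam t n * seq_dist P l v n w)"

end

theory Submission
  imports Defs
begin

lemma pw_nonneg: "lam \<ge> 0 \<Longrightarrow> t \<ge> 0 \<Longrightarrow> poisson_weight lam t n \<ge> 0"
  unfolding poisson_weight_def by simp

lemma pw_sums: "poisson_weight lam t sums 1"
proof -
  have "(\<lambda>n. (lam*t)^n /\<^sub>R fact n) sums exp (lam*t)" by (rule exp_converges)
  hence "(\<lambda>n. exp (- lam * t) * ((lam*t)^n /\<^sub>R fact n)) sums (exp (- lam * t) * exp (lam*t))"
    by (rule sums_mult)
  moreover have "exp (- lam * t) * exp (lam*t) = 1" by (simp add: exp_minus field_simps)
  moreover have "(\<lambda>n. exp (- lam * t) * ((lam*t)^n /\<^sub>R fact n)) = poisson_weight lam t"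
    unfolding poisson_weight_def by (auto simp: divide_inverse scaleR_conv_of_real)
  ultimately show ?thesis by simp
qed

lemma pw_summable_bounded:
  assumes "lam \<ge> 0" "t \<ge> 0" "\<And>n. \<bar>f n\<bar> \<le> B"
  shows "summable (\<lambda>n. poisson_weight lam t n * f n)"
proof (rule summable_comparison_test[where g="\<lambda>n. B * poisson_weight lam t n"])
  show "\<exists>N. \<forall>n\<ge>N. norm (poisson_weight lam t n * f n) \<le> B * poisson_weight lam t n"
  proof (intro exI allI impI)
    fix n
    have "\<bar>f n\<bar> * poisson_weight lam t n \<le> B * poisson_weight lam t n"
      using assms pw_nonneg[OF assms(1,2)] by (intro mult_right_mono) auto
    thus "norm (poisson_weight lam t n * f n) \<le> B * poisson_weight lam t n"
      using pw_nonneg[OF assms(1,2)] by (simp add: abs_mult mult.commute)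
  qed
  show "summable (\<lambda>n. B * poisson_weight lam t n)"
    using pw_sums by (intro summable_mult) (auto simp: sums_iff)
qed

lemma mixture_bound:
  fixes a b :: "nat \<Rightarrow> 'v::finite \<Rightarrow> real"
  assumes lt: "lam \<ge> 0" "t \<ge> 0" and ab: "\<And>n w. \<bar>a n w\<bar> \<le> 1" "\<And>n w. \<bar>b n w\<bar> \<le> 1"
    and tvb: "\<And>n. tv_norm (\<lambda>w. a n w - b n w) \<le> B"
  shows "tv_norm (\<lambda>w. (\<Sum>n. poisson_weight lam t n * a n w) - (\<Sum>n. poisson_weight lam t n * b n w)) \<le> B"
proof -
  let ?p = "poisson_weight lam t"
  have sa: "summable (\<lambda>n. ?p n * a n w)" for w by (rule pw_summable_bounded[OF lt ab(1)])
  have sb: "summable (\<lambda>n. ?p n * b n w)" for w by (rule pw_summable_bounded[OF lt ab(2)])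
  have bd: "\<bar>\<bar>a n w - b n w\<bar>\<bar> \<le> 2" for n w using ab[of n w] by auto
  have sd: "summable (\<lambda>n. ?p n * \<bar>a n w - b n w\<bar>)" for w by (rule pw_summable_bounded[OF lt bd])
  have pt: "\<bar>(\<Sum>n. ?p n * a n w) - (\<Sum>n. ?p n * b n w)\<bar> \<le> (\<Sum>n. ?p n * \<bar>a n w - b n w\<bar>)" for w
  proof -
    have "(\<Sum>n. ?p n * a n w) - (\<Sum>n. ?p n * b n w) = (\<Sum>n. ?p n * a n w - ?p n * b n w)"
      using suminf_diff[OF sa sb] by simp
    also have "\<dots> = (\<Sum>n. ?p n * (a n w - b n w))" by (simp add: right_diff_distrib)
    finally have eq: "(\<Sum>n. ?p n * a n w) - (\<Sum>n. ?p n * b n w) = (\<Sum>n. ?p n * (a n w - b n w))" .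
    have "(\<lambda>n. \<bar>?p n * (a n w - b n w)\<bar>) = (\<lambda>n. ?p n * \<bar>a n w - b n w\<bar>)"
      using pw_nonneg[OF lt] by (simp add: abs_mult)
    with sd have "summable (\<lambda>n. \<bar>?p n * (a n w - b n w)\<bar>)" by simp
    hence "\<bar>\<Sum>n. ?p n * (a n w - b n w)\<bar> \<le> (\<Sum>n. \<bar>?p n * (a n w - b n w)\<bar>)" by (rule summable_rabs)
    also have "\<dots> = (\<Sum>n. ?p n * \<bar>a n w - b n w\<bar>)"
      using pw_nonneg[OF lt] by (simp add: abs_mult)
    finally show ?thesis using eq by simp
  qed
  have "tv_norm (\<lambda>w. (\<Sum>n. ?p n * a n w) - (\<Sum>n. ?p n * b n w)) \<le> (\<Sum>w\<in>UNIV. \<Sum>n. ?p n * \<bar>a n w - b n w\<bar>)"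
    unfolding tv_norm_def by (intro sum_mono pt)
  also have "\<dots> = (\<Sum>n. \<Sum>w\<in>UNIV. ?p n * \<bar>a n w - b n w\<bar>)"
    by (rule suminf_sum[symmetric]) (rule sd)
  also have "\<dots> = (\<Sum>n. ?p n * tv_norm (\<lambda>w. a n w - b n w))"
    by (simp add: tv_norm_def sum_distrib_left)
  also have "\<dots> \<le> (\<Sum>n. ?p n * B)"
  proof (rule suminf_le)
    show "?p n * tv_norm (\<lambda>w. a n w - b n w) \<le> ?p n * B" for n
      using pw_nonneg[OF lt] tvb by (intro mult_left_mono) auto
    have "(\<lambda>n. ?p n * B) sums (1 * B)" using pw_sums by (rule sums_mult2)
    thus "summable (\<lambda>n. ?p n * B)" by (simp add: sums_iff)
    have "summable (\<lambda>n. \<Sum>w\<in>UNIV. ?p n * \<bar>a n w - b n w\<bar>)" by (intro summable_sum sd)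
    thus "summable (\<lambda>n. ?p n * tv_norm (\<lambda>w. a n w - b n w))" by (simp add: tv_norm_def sum_distrib_left)
  qed
  also have "\<dots> = B" using sums_mult2[OF pw_sums[of lam t], of B] by (simp add: sums_iff)
  finally show ?thesis .
qed

lemma geom_div_sum:
  fixes z0 :: real and ntil :: nat
  assumes "ntil \<ge> 1" "0 \<le> z0" "z0 < 1"
  shows "(\<Sum>k<n. z0 ^ (k div ntil)) \<le> real ntil / (1 - z0)"
proof -
  define q where "q = n div ntil + 1"
  have nle: "n \<le> q * ntil" unfolding q_def using assms(1)
  proof -
    have a: "n = ntil*(n div ntil) + n mod ntil" by simp
    have b: "n mod ntil < ntil" using assms(1) by simp
    show "n \<le> (n div ntil + 1) * ntil" 
    proof -
      have c: "(n div ntil + 1) * ntil = ntil*(n div ntil) + ntil" by (simp add: algebra_simps)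
      show ?thesis unfolding c using a b by linarith
    qed
  qed
  have "(\<Sum>k<n. z0 ^ (k div ntil)) \<le> (\<Sum>k<q*ntil. z0 ^ (k div ntil))"
    using nle assms by (intro sum_mono2) auto
  also have "\<dots> = (\<Sum>m<q. \<Sum>k\<in>{m*ntil..<m*ntil+ntil}. z0 ^ (k div ntil))"
    by (rule sum.nat_group[symmetric])
  also have "\<dots> = (\<Sum>m<q. real ntil * z0 ^ m)"
  proof (rule sum.cong[OF refl])
    fix m
    have "k \<in> {m*ntil..<m*ntil+ntil} \<Longrightarrow> k div ntil = m" for k
      using assms(1) by (auto intro!: div_nat_eqI simp: mult.commute)
    hence "(\<Sum>k\<in>{m*ntil..<m*ntil+ntil}. z0 ^ (k div ntil)) = (\<Sum>k\<in>{m*ntil..<m*ntil+ntil}. z0 ^ m)"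
      by (intro sum.cong) auto
    thus "(\<Sum>k\<in>{m*ntil..<m*ntil+ntil}. z0 ^ (k div ntil)) = real ntil * z0 ^ m" by simp
  qed
  also have "\<dots> = real ntil * ((1 - z0^q) / (1 - z0))"
    using assms by (simp add: sum_distrib_left[symmetric] sum_gp_strict)
  also have "\<dots> \<le> real ntil * (1 / (1 - z0))"
    using assms by (intro mult_left_mono divide_right_mono) auto
  finally show ?thesis by simp
qed

locale chain =
  fixes P :: "'x \<Rightarrow> 'v::finite \<Rightarrow> 'v \<Rightarrow> real" and A :: "'v set"
  assumes nn: "\<And>x u w. P x u w \<ge> 0"
    and sm: "\<And>x u. (\<Sum>w\<in>UNIV. P x u w) = 1"
    and absA: "\<And>a x. a \<in> A \<Longrightarrow> P x a a = 1"
begin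

lemma P_A: assumes "a \<in> A" shows "P y a w = dirac_dist a w"
proof -
  have "(\<Sum>w\<in>UNIV. P y a w) = P y a a + (\<Sum>w\<in>UNIV-{a}. P y a w)"
    by (simp add: sum.remove[of UNIV a])
  hence "(\<Sum>w\<in>UNIV-{a}. P y a w) = 0" using sm absA[OF assms] by simp
  hence "\<forall>w\<in>UNIV-{a}. P y a w = 0" by (simp add: sum_nonneg_eq_0_iff nn)
  thus ?thesis using absA[OF assms] by (auto simp: dirac_dist_def)
qed

lemma step_dirac: assumes "a \<in> A" shows "step_dist P y (dirac_dist a) = dirac_dist a"
proof
  fix w
  have "step_dist P y (dirac_dist a) w = (\<Sum>u\<in>UNIV. if u = a then P y u w else 0)"
    unfolding step_dist_def dirac_dist_def by (intro sum.cong) auto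
  also have "\<dots> = P y a w" by simp
  finally show "step_dist P y (dirac_dist a) w = dirac_dist a w" using P_A[OF assms] by simp
qed

lemma frozen_A: assumes "a \<in> A" shows "frozen_dist P y a m = dirac_dist a"
  by (induct m) (simp_all add: frozen_dist_def step_dirac[OF assms])

lemma tv_step: "tv_norm (step_dist P y \<mu>) \<le> tv_norm \<mu>"
proof -
  have "tv_norm (step_dist P y \<mu>) \<le> (\<Sum>w\<in>UNIV. \<Sum>u\<in>UNIV. \<bar>\<mu> u\<bar> * P y u w)"
    unfolding tv_norm_def step_dist_def
    by (intro sum_mono order.trans[OF sum_abs]) (simp add: abs_mult nn)
  also have "\<dots> = (\<Sum>u\<in>UNIV. \<bar>\<mu> u\<bar> * (\<Sum>w\<in>UNIV. P y u w))"
    by (subst sum.swap) (simp add: sum_distrib_left)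
  also have "\<dots> = tv_norm \<mu>" by (simp add: sm tv_norm_def)
  finally show ?thesis .
qed

lemma step_nonneg: "(\<And>u. \<nu> u \<ge> 0) \<Longrightarrow> step_dist P y \<nu> w \<ge> 0"
  unfolding step_dist_def by (intro sum_nonneg mult_nonneg_nonneg nn) auto

lemma step_sum: "(\<Sum>w\<in>UNIV. step_dist P y \<nu> w) = (\<Sum>w\<in>UNIV. \<nu> w)"
  unfolding step_dist_def by (subst sum.swap) (simp add: sum_distrib_left[symmetric] sm)

lemma iter_nonneg: "(\<And>u. \<nu> u \<ge> 0) \<Longrightarrow> (step_dist P y ^^ m) \<nu> w \<ge> 0"
  by (induct m arbitrary: w) (auto intro!: step_nonneg)

lemma iter_sum: "(\<Sum>w\<in>UNIV. (step_dist P y ^^ m) \<nu> w) = (\<Sum>w\<in>UNIV. \<nu> w)"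
  by (induct m) (auto simp: step_sum)

lemma dirac_nonneg: "dirac_dist a w \<ge> 0" by (simp add: dirac_dist_def)
lemma dirac_sum: "(\<Sum>w\<in>UNIV. dirac_dist (a::'v) w) = 1" by (simp add: dirac_dist_def)

lemma frozen_nonneg: "frozen_dist P y a m w \<ge> 0"
  unfolding frozen_dist_def by (intro iter_nonneg dirac_nonneg)
lemma frozen_sum: "(\<Sum>w\<in>UNIV. frozen_dist P y a m w) = 1"
  unfolding frozen_dist_def by (simp add: iter_sum dirac_sum)

lemma seq_nonneg: "seq_dist P l a m w \<ge> 0"
  by (induct m arbitrary: w) (auto intro!: step_nonneg simp: dirac_nonneg)
lemma seq_sum: "(\<Sum>w\<in>UNIV. seq_dist P l a m w) = 1"
  by (induct m) (auto simp: step_sum dirac_sum)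

lemma prob_le1:
  fixes \<nu> :: "'v \<Rightarrow> real"
  assumes "\<And>u. \<nu> u \<ge> 0" "(\<Sum>w\<in>UNIV. \<nu> w) = 1" shows "\<bar>\<nu> w\<bar> \<le> 1"
proof -
  have "\<nu> w \<le> (\<Sum>w\<in>UNIV. \<nu> w)" by (rule member_le_sum) (auto simp: assms)
  thus ?thesis using assms by simp
qed

lemma lip_step:
  assumes "\<And>u. (\<Sum>w\<in>UNIV. \<bar>P x u w - P y u w\<bar>) \<le> c"
  shows "tv_norm (\<lambda>w. step_dist P x \<nu> w - step_dist P y \<nu> w) \<le> c * (\<Sum>u\<in>UNIV - A. \<bar>\<nu> u\<bar>)"
proof -
  have "tv_norm (\<lambda>w. step_dist P x \<nu> w - step_dist P y \<nu> w)
      \<le> (\<Sum>w\<in>UNIV. \<Sum>u\<in>UNIV. \<bar>\<nu> u\<bar> * \<bar>P x u w - P y u w\<bar>)"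
    unfolding tv_norm_def step_dist_def
  proof (intro sum_mono)
    fix w
    have "\<bar>\<Sum>u\<in>UNIV. \<nu> u * P x u w - \<nu> u * P y u w\<bar> \<le> (\<Sum>u\<in>UNIV. \<bar>\<nu> u * P x u w - \<nu> u * P y u w\<bar>)"
      by (rule sum_abs)
    also have "\<dots> = (\<Sum>u\<in>UNIV. \<bar>\<nu> u\<bar> * \<bar>P x u w - P y u w\<bar>)"
      by (simp add: abs_mult right_diff_distrib[symmetric])
    finally show "\<bar>(\<Sum>u\<in>UNIV. \<nu> u * P x u w) - (\<Sum>u\<in>UNIV. \<nu> u * P y u w)\<bar> \<le> (\<Sum>u\<in>UNIV. \<bar>\<nu> u\<bar> * \<bar>P x u w - P y u w\<bar>)"
      by (simp add: sum_subtractf)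
  qed
  also have "\<dots> = (\<Sum>u\<in>UNIV. \<bar>\<nu> u\<bar> * (\<Sum>w\<in>UNIV. \<bar>P x u w - P y u w\<bar>))"
    by (subst sum.swap) (simp add: sum_distrib_left)
  also have "\<dots> = (\<Sum>u\<in>UNIV - A. \<bar>\<nu> u\<bar> * (\<Sum>w\<in>UNIV. \<bar>P x u w - P y u w\<bar>))"
    by (rule sum.mono_neutral_right) (auto simp: P_A)
  also have "\<dots> \<le> (\<Sum>u\<in>UNIV - A. \<bar>\<nu> u\<bar> * c)"
    by (intro sum_mono mult_left_mono assms) auto
  also have "\<dots> = c * (\<Sum>u\<in>UNIV - A. \<bar>\<nu> u\<bar>)" by (simp add: sum_distrib_left mult.commute)
  finally show ?thesis .
qed

lemma iter_repr: "(step_dist P x ^^ m) \<nu> = (\<lambda>w. \<Sum>u\<in>UNIV. \<nu> u * frozen_dist P x u m w)"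
proof (induct m)
  case 0
  show ?case unfolding frozen_dist_def dirac_dist_def
    by (auto simp: if_distrib cong: if_cong)
next
  case (Suc m)
  show ?case
  proof
    fix w
    have "(step_dist P x ^^ Suc m) \<nu> w = (\<Sum>u'\<in>UNIV. (\<Sum>u\<in>UNIV. \<nu> u * frozen_dist P x u m u') * P x u' w)"
      by (simp only: funpow.simps comp_apply Suc) (simp add: step_dist_def)
    also have "\<dots> = (\<Sum>u\<in>UNIV. \<nu> u * (\<Sum>u'\<in>UNIV. frozen_dist P x u m u' * P x u' w))"
      by (simp add: sum_distrib_right sum_distrib_left mult.assoc) (rule sum.swap)
    also have "\<dots> = (\<Sum>u\<in>UNIV. \<nu> u * frozen_dist P x u (Suc m) w)"
      by (simp add: frozen_dist_def step_dist_def)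
    finally show "(step_dist P x ^^ Suc m) \<nu> w = (\<Sum>u\<in>UNIV. \<nu> u * frozen_dist P x u (Suc m) w)" .
  qed
qed

end


locale chain2 = chain P A for P :: "'x \<Rightarrow> 'v::finite \<Rightarrow> 'v \<Rightarrow> real" and A +
  fixes ntil :: nat and z0 :: real
  assumes ntil_pos: "ntil \<ge> 1" and z0_lt: "z0 < 1"
    and escape: "\<And>x v. (\<Sum>w\<in>UNIV - A. frozen_dist P x v ntil w) \<le> z0"
begin

lemma z0_nonneg: "z0 \<ge> 0"
proof -
  obtain x :: 'x and v :: 'v where True by simp
  have "0 \<le> (\<Sum>w\<in>UNIV - A. frozen_dist P x v ntil w)" by (intro sum_nonneg frozen_nonneg)
  thus ?thesis using escape[of x v] by linarith
qed

lemma offA_step: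
  fixes \<nu> :: "'v \<Rightarrow> real"
  assumes "\<And>u. \<nu> u \<ge> 0"
  shows "(\<Sum>w\<in>UNIV - A. (step_dist P x ^^ ntil) \<nu> w) \<le> z0 * (\<Sum>u\<in>UNIV - A. \<nu> u)"
proof -
  have "(\<Sum>w\<in>UNIV - A. (step_dist P x ^^ ntil) \<nu> w) = (\<Sum>w\<in>UNIV - A. \<Sum>u\<in>UNIV. \<nu> u * frozen_dist P x u ntil w)"
    by (simp add: iter_repr)
  also have "\<dots> = (\<Sum>u\<in>UNIV. \<nu> u * (\<Sum>w\<in>UNIV - A. frozen_dist P x u ntil w))"
    by (subst sum.swap) (simp add: sum_distrib_left)
  also have "\<dots> = (\<Sum>u\<in>UNIV - A. \<nu> u * (\<Sum>w\<in>UNIV - A. frozen_dist P x u ntil w))"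
    by (rule sum.mono_neutral_right) (auto simp: frozen_A dirac_dist_def)
  also have "\<dots> \<le> (\<Sum>u\<in>UNIV - A. \<nu> u * z0)"
    by (intro sum_mono mult_left_mono escape assms)
  finally show ?thesis by (simp add: sum_distrib_left mult.commute)
qed

lemma decay:
  fixes \<nu> :: "'v \<Rightarrow> real"
  assumes "\<And>u. \<nu> u \<ge> 0"
  shows "(\<Sum>w\<in>UNIV - A. (step_dist P x ^^ (q * ntil)) \<nu> w) \<le> z0 ^ q * (\<Sum>u\<in>UNIV - A. \<nu> u)"
proof (induct q)
  case 0 show ?case by simp
next
  case (Suc q)
  have "(step_dist P x ^^ (Suc q * ntil)) \<nu> = (step_dist P x ^^ ntil) ((step_dist P x ^^ (q * ntil)) \<nu>)"
    by (simp add: funpow_add)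
  hence "(\<Sum>w\<in>UNIV - A. (step_dist P x ^^ (Suc q * ntil)) \<nu> w)
      \<le> z0 * (\<Sum>u\<in>UNIV - A. (step_dist P x ^^ (q * ntil)) \<nu> u)"
    using offA_step[where \<nu>="(step_dist P x ^^ (q * ntil)) \<nu>" and x=x] iter_nonneg assms by simp
  also have "\<dots> \<le> z0 * (z0 ^ q * (\<Sum>u\<in>UNIV - A. \<nu> u))"
    using Suc z0_nonneg by (intro mult_left_mono) auto
  finally show ?case by simp
qed

lemma frozen_off: "(\<Sum>w\<in>UNIV - A. frozen_dist P x v n w) \<le> z0 ^ (n div ntil)"
proof -
  let ?q = "n div ntil" and ?r = "n mod ntil"
  let ?\<nu> = "(step_dist P x ^^ ?r) (dirac_dist v)"
  have "n = ?q * ntil + ?r" by simp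
  hence "frozen_dist P x v n = (step_dist P x ^^ (?q * ntil)) ?\<nu>"
    unfolding frozen_dist_def by (metis funpow_add comp_apply)
  hence "(\<Sum>w\<in>UNIV - A. frozen_dist P x v n w) \<le> z0 ^ ?q * (\<Sum>u\<in>UNIV - A. ?\<nu> u)"
    using decay[where \<nu>="?\<nu>" and x=x and q="?q", OF iter_nonneg[OF dirac_nonneg]] by simp
  also have "\<dots> \<le> z0 ^ ?q * 1"
  proof (intro mult_left_mono)
    have "(\<Sum>u\<in>UNIV - A. ?\<nu> u) \<le> (\<Sum>u\<in>UNIV. ?\<nu> u)"
      by (intro sum_mono2) (auto intro: iter_nonneg dirac_nonneg)
    also have "\<dots> = 1" by (simp add: iter_sum dirac_sum)
    finally show "(\<Sum>u\<in>UNIV - A. ?\<nu> u) \<le> 1" .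
    show "0 \<le> z0 ^ ?q" using z0_nonneg by simp
  qed
  finally show ?thesis by simp
qed

lemma tv_add: "tv_norm (\<lambda>w. f w + g w) \<le> tv_norm f + tv_norm (g :: 'v \<Rightarrow> real)"
  unfolding tv_norm_def by (simp add: sum.distrib[symmetric] sum_mono abs_triangle_ineq)

lemma D_bound:
  assumes c: "\<And>k u. k \<ge> 1 \<Longrightarrow> (\<Sum>w\<in>UNIV. \<bar>P x u w - P (l k) u w\<bar>) \<le> c" and c0: "c \<ge> 0"
  shows "tv_norm (\<lambda>w. frozen_dist P x v n w - seq_dist P l v n w) \<le> c * (\<Sum>k<n. z0 ^ (k div ntil))"
proof (induct n)
  case 0 show ?case by (simp add: tv_norm_def frozen_dist_def)
next
  case (Suc n)
  let ?f = "frozen_dist P x v n" and ?s = "seq_dist P l v n"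
  have fS: "frozen_dist P x v (Suc n) = step_dist P x ?f" by (simp add: frozen_dist_def)
  have eq: "(\<lambda>w. frozen_dist P x v (Suc n) w - seq_dist P l v (Suc n) w)
    = (\<lambda>w. (step_dist P x ?f w - step_dist P (l (Suc n)) ?f w) + step_dist P (l (Suc n)) (\<lambda>u. ?f u - ?s u) w)"
    unfolding fS by (rule ext) (simp add: step_dist_def sum_subtractf left_diff_distrib)
  have "tv_norm (\<lambda>w. frozen_dist P x v (Suc n) w - seq_dist P l v (Suc n) w)
     \<le> tv_norm (\<lambda>w. step_dist P x ?f w - step_dist P (l (Suc n)) ?f w) + tv_norm (step_dist P (l (Suc n)) (\<lambda>u. ?f u - ?s u))"
    unfolding eq by (rule tv_add)
  also have "\<dots> \<le> c * (\<Sum>u\<in>UNIV - A. \<bar>?f u\<bar>) + tv_norm (\<lambda>u. ?f u - ?s u)"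
    by (intro add_mono lip_step c tv_step) simp
  also have "\<dots> \<le> c * z0 ^ (n div ntil) + c * (\<Sum>k<n. z0 ^ (k div ntil))"
    using frozen_off[of x v n] c0 Suc frozen_nonneg
    by (intro add_mono mult_left_mono) auto
  finally show ?case by (simp add: distrib_left add.commute)
qed

end


theorem mainTheorem4:
  fixes P :: "real^'n \<Rightarrow> 'v::finite \<Rightarrow> 'v \<Rightarrow> real"
    and e :: "nat \<Rightarrow> 'v" and L :: nat
    and ntil :: nat and z0 :: real and K0 :: real
  assumes distinct_e: "inj_on e {1..L}"
    and stoch_nonneg: "\<And>x u w. P x u w \<ge> 0"
    and stoch_sum: "\<And>x u. (\<Sum>w\<in>UNIV. P x u w) = 1"
    and absorbing: "\<And>i x. i \<in> {1..L} \<Longrightarrow> P x (e i) (e i) = 1"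
    and ntil_pos: "ntil \<ge> 1" and z0_lt: "z0 < 1"
    and escape: "\<And>x v. (\<Sum>w\<in>UNIV - e ` {1..L}. frozen_dist P x v ntil w) \<le> z0"
    and K0_pos: "K0 > 0"
    and lipschitz: "\<And>v x x'. (\<Sum>w\<in>UNIV. \<bar>P x v w - P x' v w\<bar>) \<le> K0 * norm1 (x - x')"
  shows "\<exists>K>0. \<forall>x v lam t (l :: nat \<Rightarrow> real^'n).
           lam > 0 \<longrightarrow> t \<ge> 0 \<longrightarrow>
           (\<forall>k\<ge>1. norm1 (x - l k) \<le> (1 - z0) / (2 * K0 * real ntil)) \<longrightarrow>
           tv_norm (\<lambda>w. mu_frozen P lam x v t w - mu_seq P lam v l t w)
             \<le> K * (SUP i\<in>{1..}. norm1 (x - l i))"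
proof -
  interpret C: chain2 P "e ` {1..L}" ntil z0
  proof (unfold_locales)
    show "\<And>x u w. P x u w \<ge> 0" by (rule stoch_nonneg)
    show "\<And>x u. (\<Sum>w\<in>UNIV. P x u w) = 1" by (rule stoch_sum)
    show "\<And>a x. a \<in> e ` {1..L} \<Longrightarrow> P x a a = 1" using absorbing by blast
    show "ntil \<ge> 1" by (rule ntil_pos)
    show "z0 < 1" by (rule z0_lt)
    show "\<And>x v. (\<Sum>w\<in>UNIV - e ` {1..L}. frozen_dist P x v ntil w) \<le> z0" by (rule escape)
  qed
  define K where "K = K0 * real ntil / (1 - z0)"
  have Kpos: "K > 0" unfolding K_def using K0_pos ntil_pos z0_lt by auto
  show ?thesis
  proof (intro exI[of _ K] conjI Kpos allI impI)
    fix x :: "real^'n" and v :: 'v and lam t :: real and l :: "nat \<Rightarrow> real^'n"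
    assume lam: "lam > 0" and t: "t \<ge> 0"
      and hb: "\<forall>k\<ge>1. norm1 (x - l k) \<le> (1 - z0) / (2 * K0 * real ntil)"
    define \<delta> where "\<delta> = (SUP i\<in>{1..}. norm1 (x - l i))"
    have bdd: "bdd_above ((\<lambda>i. norm1 (x - l i)) ` {1..})"
      using hb by (intro bdd_aboveI2[where M="(1 - z0) / (2 * K0 * real ntil)"]) auto
    have le: "norm1 (x - l k) \<le> \<delta>" if "k \<ge> 1" for k
      unfolding \<delta>_def using that by (intro cSUP_upper bdd) auto
    have n1: "norm1 y \<ge> 0" for y :: "real^'n" unfolding norm1_def by (intro sum_nonneg) auto
    have d0: "\<delta> \<ge> 0" using le[of 1] n1[of "x - l 1"] by simp
    have c: "(\<Sum>w\<in>UNIV. \<bar>P x u w - P (l k) u w\<bar>) \<le> K0 * \<delta>" if "k \<ge> 1" for k u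
      using lipschitz[of x u "l k"] le[OF that] K0_pos
      by (meson mult_le_cancel_left_pos order.trans)
    have D: "tv_norm (\<lambda>w. frozen_dist P x v n w - seq_dist P l v n w) \<le> K * \<delta>" for n
    proof -
      have "tv_norm (\<lambda>w. frozen_dist P x v n w - seq_dist P l v n w) \<le> (K0 * \<delta>) * (\<Sum>k<n. z0 ^ (k div ntil))"
        using C.D_bound[where c="K0*\<delta>" and x=x and l=l and v=v and n=n] c K0_pos d0 by auto
      also have "\<dots> \<le> (K0 * \<delta>) * (real ntil / (1 - z0))"
        using geom_div_sum[OF ntil_pos C.z0_nonneg z0_lt] K0_pos d0 by (intro mult_left_mono) auto
      also have "\<dots> = K * \<delta>" unfolding K_def by simp
      finally show ?thesis .
    qed
    have "tv_norm (\<lambda>w. (\<Sum>n. poisson_weight lam t n * frozen_dist P x v n w) - (\<Sum>n. poisson_weight lam t n * seq_dist P l v n w)) \<le> K * \<delta>"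
    proof (rule mixture_bound)
      show "0 \<le> lam" "0 \<le> t" using lam t by auto
      show "\<bar>frozen_dist P x v n w\<bar> \<le> 1" for n w
        by (rule C.prob_le1) (auto intro: C.frozen_nonneg C.frozen_sum)
      show "\<bar>seq_dist P l v n w\<bar> \<le> 1" for n w
        by (rule C.prob_le1) (auto intro: C.seq_nonneg C.seq_sum)
      show "tv_norm (\<lambda>w. frozen_dist P x v n w - seq_dist P l v n w) \<le> K * \<delta>" for n by (rule D)
    qed
    thus "tv_norm (\<lambda>w. mu_frozen P lam x v t w - mu_seq P lam v l t w) \<le> K * (SUP i\<in>{1..}. norm1 (x - l i))"
      unfolding mu_frozen_def mu_seq_def \<delta>_def .
  qed
qed

end
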